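(* Let $\alpha_0,\dots,\alpha_{L-1}$ be i.i.d. uniform on $(-\tfrac12,\tfrac12)$, extended $L$-periodically; let $\omega_i=\Delta\alpha_i-[\![\Delta\alpha_i]\!]$, $S=\sum_{i=0}^{L-1}[\![\Delta\alpha_i]\!]$, and let $\sigma$ be the permutation of $\{0,\dots,L-1\}$ with $\omega_{\sigma(0)}<\dots<\omega_{\sigma(L-1)}$. Define $J'_i=-\mathbf 1(i\in\sigma\{L-|S|,\dots,L-1\})$ if $S<0$, $J'_i=0$ if $S=0$, and $J'_i=\mathbf 1(i\in\sigma\{0,\dots,S-1\})$ if $S>0$, and let $$d\equiv\sum_{i=0}^{L-1}i\left([\![\Delta\alpha_i]\!]-J'_i\right)\pmod L,\qquad d\in\{0,\dots,L-1\}.$$ Then $d$ is uniformly distributed on $\{0,\dots,L-1\}$ and independent of $\vec\omega=(\omega_0,\dots,\omega_{L-1})$.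
   Context: $\Delta$ is the periodic discrete Laplacian, $\Delta\alpha_i=\alpha_{i-1}-2\alpha_i+\alpha_{i+1}$ with indices mod $L$; $[\![x]\!]$ is the integer nearest to $x$; $\sigma\{a,\dots,b\}$ denotes the image of the index set $\{a,\dots,b\}$ under $\sigma$; $\mathbf 1(\cdot)$ is the indicator function. *)

theory Defs
  imports "HOL-Probability.Probability"
begin

definition lap :: "nat \<Rightarrow> (nat \<Rightarrow> real) \<Rightarrow> nat \<Rightarrow> real" where
  "lap L \<alpha> i = \<alpha> ((i + L - 1) mod L) - 2 * \<alpha> (i mod L) + \<alpha> ((i + 1) mod L)"

text \<open>Nearest integer: round (ties, a null event here, are rounded up).\<close>
definition omega :: "nat \<Rightarrow> (nat \<Rightarrow> real) \<Rightarrow> nat \<Rightarrow> real" where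
  "omega L \<alpha> i = lap L \<alpha> i - of_int (round (lap L \<alpha> i))"

definition Ssum :: "nat \<Rightarrow> (nat \<Rightarrow> real) \<Rightarrow> int" where
  "Ssum L \<alpha> = (\<Sum>i<L. round (lap L \<alpha> i))"

text \<open>The sorting permutation: sigma a is the index with the a-th smallest omega
  (stable sort; ties only on a null set).\<close>
definition sigma :: "nat \<Rightarrow> (nat \<Rightarrow> real) \<Rightarrow> nat \<Rightarrow> nat" where
  "sigma L \<alpha> a = sort_key (omega L \<alpha>) [0..<L] ! a"

definition Jp :: "nat \<Rightarrow> (nat \<Rightarrow> real) \<Rightarrow> nat \<Rightarrow> int" where
  "Jp L \<alpha> i =
     (if Ssum L \<alpha> < 0 then
        - (if i \<in> sigma L \<alpha> ` {L - nat \<bar>Ssum L \<alpha>\<bar> ..< L} then 1 else 0)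
      else if Ssum L \<alpha> = 0 then 0
      else (if i \<in> sigma L \<alpha> ` {..< nat (Ssum L \<alpha>)} then 1 else 0))"

definition dval :: "nat \<Rightarrow> (nat \<Rightarrow> real) \<Rightarrow> nat" where
  "dval L \<alpha> = nat ((\<Sum>i<L. int i * (round (lap L \<alpha> i) - Jp L \<alpha> i)) mod int L)"

definition alpha_space :: "nat \<Rightarrow> (nat \<Rightarrow> real) measure" where
  "alpha_space L = PiM {..<L} (\<lambda>_. uniform_measure lborel {-1/2 <..< 1/2 :: real})"

end

theory Submission
  imports Defs
begin

lemma round_add_int: "round (x + of_int z :: real) = round x + z"
  by (intro round_unique) (use of_int_round_gt[of x] of_int_round_le[of x] in auto)

lemma shift_invariance:
  assumes L: "L \<ge> 1" and "\<And>i. lap L \<beta> i = lap L \<alpha> i + of_int (z i)" "(\<Sum>i<L. z i) = 0"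
  shows "omega L \<beta> = omega L \<alpha>" "Ssum L \<beta> = Ssum L \<alpha>" "Jp L \<beta> = Jp L \<alpha>"
    "dval L \<beta> = nat ((int (dval L \<alpha>) + (\<Sum>i<L. int i * z i)) mod int L)"
proof -
  have r: "round (lap L \<beta> i) = round (lap L \<alpha> i) + z i" for i
    using assms(2) round_add_int by simp
  show o: "omega L \<beta> = omega L \<alpha>"
    proof (rule ext) fix i show "omega L \<beta> i = omega L \<alpha> i" unfolding omega_def r[of i] by (simp add: assms(2)) qed
  show s: "Ssum L \<beta> = Ssum L \<alpha>"
    unfolding Ssum_def r sum.distrib assms(3) by simp
  have sg: "sigma L \<beta> = sigma L \<alpha>" unfolding sigma_def o by simp
  show j: "Jp L \<beta> = Jp L \<alpha>" by (rule ext) (simp add: Jp_def s sg)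
  have "(\<Sum>i<L. int i * (round (lap L \<beta> i) - Jp L \<beta> i)) =
        (\<Sum>i<L. int i * (round (lap L \<alpha> i) - Jp L \<alpha> i)) + (\<Sum>i<L. int i * z i)"
    unfolding r j sum.distrib[symmetric] by (simp add: algebra_simps)
  moreover have "int (dval L \<alpha>) = (\<Sum>i<L. int i * (round (lap L \<alpha> i) - Jp L \<alpha> i)) mod int L"
    unfolding dval_def using L by simp
  ultimately show "dval L \<beta> = nat ((int (dval L \<alpha>) + (\<Sum>i<L. int i * z i)) mod int L)"
    unfolding dval_def by (simp add: mod_add_left_eq)
qed

definition lapZ :: "nat \<Rightarrow> (nat \<Rightarrow> int) \<Rightarrow> nat \<Rightarrow> int" where
  "lapZ L n i = n ((i + L - 1) mod L) - 2 * n (i mod L) + n ((i + 1) mod L)"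

definition eL :: "nat \<Rightarrow> nat \<Rightarrow> int" where
  "eL L i = (if L \<ge> 2 \<and> i mod L = 0 then 1 else if L \<ge> 2 \<and> i mod L = L - 1 then -1 else 0)"

lemma lap_cong:
  assumes "L \<ge> 1" "\<And>j. j < L \<Longrightarrow> f j = g j"
  shows "lap L f i = lap L g i"
  using assms unfolding lap_def by simp

lemma lap_lin: "lap L (\<lambda>j. f j + g j - h j) i = lap L f i + lap L g i - lap L h i"
  unfolding lap_def by simp

lemma lap_int: "lap L (\<lambda>j. of_int (n j)) i = of_int (lapZ L n i)"
  unfolding lap_def lapZ_def by simp

lemma lap_id:
  assumes "L \<ge> 1"
  shows "lap L (\<lambda>j. real j / real L) i = of_int (eL L i)"
proof -
  define j where "j = i mod L"
  have jL: "j < L" using assms j_def by simp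
  have a: "(i + L - 1) mod L = (j + L - 1) mod L"
    using assms unfolding j_def by (metis Nat.add_diff_assoc mod_add_left_eq)
  have b: "(i + 1) mod L = (j + 1) mod L" unfolding j_def by (simp add: mod_Suc_eq)
  have "lap L (\<lambda>j. real j / real L) i =
    (real ((j + L - 1) mod L) - 2 * real j + real ((j + 1) mod L)) / real L"
    unfolding lap_def a b j_def[symmetric] by (simp add: diff_divide_distrib add_divide_distrib)
  also have "\<dots> = of_int (eL L i)"
  proof (cases "L = 1")
    case True then show ?thesis using jL by (simp add: eL_def)
  next
    case False
    hence L2: "L \<ge> 2" using assms by simp
    show ?thesis
    proof (cases "j = 0")
      case True
      then show ?thesis using L2 assms by (simp add: eL_def j_def[symmetric] of_nat_diff)
    next
      case j0: False
      show ?thesis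
      proof (cases "j = L - 1")
        case True
        have "(j + L - 1) mod L = L - 2" using True L2 j0 by (simp add: mod_if)
        moreover have "(j + 1) mod L = 0" using True L2 by simp
        ultimately show ?thesis using True L2 j0 by (simp add: eL_def j_def[symmetric] of_nat_diff field_simps)
      next
        case False
        have "(j + L - 1) mod L = j - 1" using jL j0 by (simp add: mod_if)
        moreover have "(j + 1) mod L = j + 1" using False jL by simp
        ultimately show ?thesis using False L2 j0 by (simp add: eL_def j_def[symmetric] of_nat_diff)
      qed
    qed
  qed
  finally show ?thesis .
qed

lemma ps: "(k::nat) < L \<Longrightarrow> ((k + 1) mod L + L - 1) mod L = k"
  by (cases "k + 1 = L") (auto simp: mod_if)

lemma sp: "(k::nat) < L \<Longrightarrow> ((k + L - 1) mod L + 1) mod L = k"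
  by (cases "k = 0") (auto simp: mod_if)

lemma ps': "(k::nat) < L \<Longrightarrow> (Suc k mod L + L - Suc 0) mod L = k"
  using ps by simp
lemma sp': "(k::nat) < L \<Longrightarrow> Suc ((k + L - Suc 0) mod L) mod L = k"
  using sp by simp

lemma bij_succ: "L \<ge> 1 \<Longrightarrow> bij_betw (\<lambda>i::nat. (i + 1) mod L) {..<L} {..<L}"
  by (rule bij_betw_byWitness[where f'="\<lambda>i. (i + L - 1) mod L"]) (auto simp: ps' sp')

lemma bij_pred: "L \<ge> 1 \<Longrightarrow> bij_betw (\<lambda>i::nat. (i + L - 1) mod L) {..<L} {..<L}"
  by (rule bij_betw_byWitness[where f'="\<lambda>i. (i + 1) mod L"]) (auto simp: ps' sp')

lemma sum_succ: "(L::nat) \<ge> 1 \<Longrightarrow> (\<Sum>i<L. g ((i + 1) mod L)) = (\<Sum>i<L. g i)"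
  using sum.reindex_bij_betw[OF bij_succ] by blast

lemma sum_pred: assumes L: "(L::nat) \<ge> 1" shows "(\<Sum>i<L. g ((i + L - 1) mod L)) = (\<Sum>i<L. g i)"
  by (rule sum.reindex_bij_betw[OF bij_pred[OF L]])

lemma sum_lapZ: "(L::nat) \<ge> 1 \<Longrightarrow> (\<Sum>i<L. lapZ L n i) = 0"
  unfolding lapZ_def sum.distrib sum_subtractf sum_succ sum_pred
  by (simp add: sum_distrib_left[symmetric])

lemma dvd_lapZ: assumes L: "L \<ge> 1" shows "int L dvd (\<Sum>i<L. int i * lapZ L n i)"
proof -
  have 1: "(\<Sum>i<L. int i * n ((i + L - 1) mod L)) = (\<Sum>k<L. int ((k + 1) mod L) * n k)"
    unfolding sum_succ[OF L, of "\<lambda>i. int i * n ((i + L - 1) mod L)", symmetric]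
    by (intro sum.cong) (auto simp: ps')
  have 2: "(\<Sum>i<L. int i * n ((i + 1) mod L)) = (\<Sum>k<L. int ((k + L - 1) mod L) * n k)"
    unfolding sum_pred[OF L, of "\<lambda>i. int i * n ((i + 1) mod L)", symmetric]
    by (intro sum.cong) (auto simp: sp')
  have 3: "(\<Sum>i<L. int i * lapZ L n i) = (\<Sum>i<L. int i * n ((i + L - 1) mod L))
      - 2 * (\<Sum>i<L. int i * n i) + (\<Sum>i<L. int i * n ((i + 1) mod L))"
  proof -
    have "(\<Sum>i<L. int i * lapZ L n i) = (\<Sum>i<L. int i * n ((i + L - 1) mod L)
       - 2 * (int i * n i) + int i * n ((i + 1) mod L))"
      by (intro sum.cong) (auto simp: lapZ_def ring_distribs)
    then show ?thesis by (simp add: sum.distrib sum_subtractf sum_distrib_left)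
  qed
  have 4: "(\<Sum>k<L. (int ((k + 1) mod L) + int ((k + L - 1) mod L) - 2 * int k) * n k)
     = (\<Sum>k<L. int ((k + 1) mod L) * n k) + (\<Sum>k<L. int ((k + L - 1) mod L) * n k) - 2 * (\<Sum>i<L. int i * n i)"
    by (simp add: sum.distrib sum_subtractf sum_distrib_left ring_distribs mult.assoc)
  have "(\<Sum>i<L. int i * lapZ L n i) = (\<Sum>k<L. (int ((k + 1) mod L) + int ((k + L - 1) mod L) - 2 * int k) * n k)"
    unfolding 3 4 1 2 by simp
  also have "int L dvd \<dots>"
  proof (intro dvd_sum dvd_mult2)
    fix k assume k: "k \<in> {..<L}"
    show "int L dvd int ((k + 1) mod L) + int ((k + L - 1) mod L) - 2 * int k"
    proof (cases "L = 1")
      case True then show ?thesis by simp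
    next
      case False
      show ?thesis
      proof (cases "k = 0")
        case True then show ?thesis using False L by (simp add: of_nat_diff)
      next
        case k0: False
        show ?thesis
        proof (cases "k = L - 1")
          case True
          then show ?thesis using False L k0 by (simp add: of_nat_diff mod_if)
        next
          case False
          then show ?thesis using k k0 L by (simp add: of_nat_diff mod_if)
        qed
      qed
    qed
  qed
  finally show ?thesis .
qed

lemma sum_eL: "(L::nat) \<ge> 1 \<Longrightarrow> (\<Sum>i<L. eL L i) = 0"
proof -
  assume L: "L \<ge> 1"
  show ?thesis
  proof (cases "L = 1")
    case True then show ?thesis by (simp add: eL_def)
  next
    case False
    have "(\<Sum>i<L. eL L i) = (\<Sum>i<L. (if i = 0 then 1 else 0) - (if i = L - 1 then 1 else 0))"
      using False L by (intro sum.cong) (auto simp: eL_def)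
    also have "\<dots> = 0" using L unfolding sum_subtractf by simp
    finally show ?thesis .
  qed
qed

lemma sum_ieL: "(L::nat) \<ge> 1 \<Longrightarrow> (\<Sum>i<L. int i * eL L i) mod int L = 1 mod int L"
proof -
  assume L: "L \<ge> 1"
  show ?thesis
  proof (cases "L = 1")
    case True then show ?thesis by (simp add: eL_def)
  next
    case False
    have "(\<Sum>i<L. int i * eL L i) = (\<Sum>i<L. (if i = 0 then 0 else 0) - (if i = L - 1 then int i else 0))"
      using False L by (intro sum.cong) (auto simp: eL_def)
    also have "\<dots> = 1 - int L" using L unfolding sum_subtractf by (simp add: of_nat_diff)
    finally show ?thesis by simp
  qed
qed

definition phi :: "real \<Rightarrow> real \<Rightarrow> real" where
  "phi c x = (if x + c < 1/2 then x + c else x + c - 1)"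

definition Tm :: "nat \<Rightarrow> (nat \<Rightarrow> real) \<Rightarrow> nat \<Rightarrow> real" where
  "Tm L \<alpha> = (\<lambda>i\<in>{..<L}. phi (real i / real L) (\<alpha> i))"

definition nn :: "nat \<Rightarrow> (nat \<Rightarrow> real) \<Rightarrow> nat \<Rightarrow> int" where
  "nn L \<alpha> j = (if \<alpha> j + real j / real L < 1/2 then 0 else 1)"

lemma Tm_eq: "j < L \<Longrightarrow> Tm L \<alpha> j = \<alpha> j + real j / real L - of_int (nn L \<alpha> j)"
  by (simp add: Tm_def phi_def nn_def)

lemma lap_Tm:
  assumes L: "L \<ge> 1"
  shows "lap L (Tm L \<alpha>) i = lap L \<alpha> i + of_int (eL L i - lapZ L (nn L \<alpha>) i)"
proof -
  have "lap L (Tm L \<alpha>) i = lap L (\<lambda>j. \<alpha> j + real j / real L - of_int (nn L \<alpha> j)) i"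
    by (rule lap_cong[OF L]) (simp add: Tm_eq)
  also have "\<dots> = lap L \<alpha> i + lap L (\<lambda>j. real j / real L) i - lap L (\<lambda>j. of_int (nn L \<alpha> j)) i"
    by (rule lap_lin)
  also have "\<dots> = lap L \<alpha> i + of_int (eL L i - lapZ L (nn L \<alpha>) i)"
    unfolding lap_id[OF L] lap_int by simp
  finally show ?thesis .
qed

lemma Tm_shift:
  assumes L: "L \<ge> 1"
  shows "omega L (Tm L \<alpha>) = omega L \<alpha>" "dval L (Tm L \<alpha>) = (dval L \<alpha> + 1) mod L"
proof -
  define z where "z i = eL L i - lapZ L (nn L \<alpha>) i" for i
  have h: "\<And>i. lap L (Tm L \<alpha>) i = lap L \<alpha> i + of_int (z i)"
    unfolding z_def by (rule lap_Tm[OF L])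
  have s: "(\<Sum>i<L. z i) = 0" unfolding z_def sum_subtractf sum_eL[OF L] sum_lapZ[OF L] by simp
  note S = shift_invariance[OF L h s]
  show "omega L (Tm L \<alpha>) = omega L \<alpha>" by (rule S(1))
  have "(\<Sum>i<L. int i * z i) mod int L = 1 mod int L"
  proof -
    have "(\<Sum>i<L. int i * z i) = (\<Sum>i<L. int i * eL L i) - (\<Sum>i<L. int i * lapZ L (nn L \<alpha>) i)"
      unfolding z_def by (simp add: right_diff_distrib sum_subtractf)
    moreover obtain q where "(\<Sum>i<L. int i * lapZ L (nn L \<alpha>) i) = int L * q"
      using dvd_lapZ[OF L, of "nn L \<alpha>"] by (auto elim: dvdE)
    ultimately show ?thesis using sum_ieL[OF L] by (simp add: mod_diff_eq[symmetric])
  qed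
  then have "(int (dval L \<alpha>) + (\<Sum>i<L. int i * z i)) mod int L = (int (dval L \<alpha>) + 1) mod int L"
    by (metis mod_add_right_eq)
  then show "dval L (Tm L \<alpha>) = (dval L \<alpha> + 1) mod L"
    unfolding S(4) by (simp add: nat_mod_as_int add.commute)
qed

abbreviation U :: "real measure" where "U \<equiv> uniform_measure lborel {-1/2 <..< 1/2 :: real}"

lemma U_prob: "prob_space U"
  by (rule prob_space_uniform_measure) auto

lemma sets_U[simp, measurable_cong]: "sets U = sets borel" by simp
lemma space_U[simp]: "space U = UNIV" by simp

lemma phi_meas[measurable]: "phi c \<in> borel_measurable borel"
  unfolding phi_def by measurable

lemma lborel_shift[simp del]: "B \<in> sets borel \<Longrightarrow> emeasure lborel ((\<lambda>x. x + c) -` B) = emeasure lborel (B :: real set)"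
proof -
  assume B: "B \<in> sets borel"
  have "emeasure lborel B = emeasure (distr lborel borel ((+) c)) B" by (simp add: lborel_distr_plus)
  also have "\<dots> = emeasure lborel ((+) c -` B \<inter> space lborel)" using B by (simp add: emeasure_distr)
  also have "(+) c -` B = (\<lambda>x. x + c) -` B" by (auto simp: add.commute)
  finally show ?thesis by simp
qed

lemma phi_pres_lborel:
  assumes c: "0 \<le> c" "c < 1" and A: "A \<in> sets borel"
  shows "emeasure lborel ({-1/2<..<1/2} \<inter> phi c -` A) = emeasure lborel ({-1/2<..<1/2} \<inter> A)"
proof -
  let ?A1 = "A \<inter> {c - 1/2 <..< 1/2}" and ?A2 = "A \<inter> {-1/2 ..< c - 1/2}"
  have e: "{-1/2<..<1/2} \<inter> phi c -` A = (\<lambda>x. x + c) -` ?A1 \<union> (\<lambda>x. x + (c - 1)) -` ?A2"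
    using c by (auto simp: phi_def add_diff_eq split: if_splits)
  have d: "(\<lambda>x. x + c) -` ?A1 \<inter> (\<lambda>x. x + (c - 1)) -` ?A2 = {}" by auto
  have "emeasure lborel ({-1/2<..<1/2} \<inter> phi c -` A)
      = emeasure lborel ((\<lambda>x. x + c) -` ?A1) + emeasure lborel ((\<lambda>x. x + (c - 1)) -` ?A2)"
    unfolding e using A d by (intro plus_emeasure[symmetric]) auto
  also have "\<dots> = emeasure lborel ?A1 + emeasure lborel ?A2"
    using A lborel_shift[of ?A1 c] lborel_shift[of ?A2 "c - 1"] by simp
  also have "\<dots> = emeasure lborel (?A1 \<union> ?A2)"
    using A c by (intro plus_emeasure) auto
  also have "\<dots> = emeasure lborel ((?A1 \<union> ?A2) \<union> (A \<inter> {c - 1/2}))"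
    using A by (intro emeasure_Un_null_set[symmetric] null_set_Int1) auto
  also have "(?A1 \<union> ?A2) \<union> (A \<inter> {c - 1/2}) = ({-1/2<..<1/2} \<inter> A) \<union> (A \<inter> {-1/2})"
    using c by auto
  also have "emeasure lborel \<dots> = emeasure lborel ({-1/2<..<1/2} \<inter> A)"
    using A by (intro emeasure_Un_null_set null_set_Int1) auto
  finally show ?thesis .
qed

lemma phi_pres:
  assumes c: "0 \<le> c" "c < 1" and A: "A \<in> sets borel"
  shows "emeasure U (phi c -` A \<inter> space U) = emeasure U A"
proof -
  have "phi c -` A \<in> sets borel" using measurable_sets[OF phi_meas A] by simp
  then show ?thesis using A phi_pres_lborel[OF c A] by (simp add: Int_commute)
qed

lemma alpha_space_def': "alpha_space L = PiM {..<L} (\<lambda>_. U)" by (simp add: alpha_space_def)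

lemma space_alpha: "space (alpha_space L) = PiE {..<L} (\<lambda>_. UNIV)"
  by (simp add: alpha_space_def space_PiM)

lemma phi_sets: "A \<in> sets borel \<Longrightarrow> phi c -` A \<in> sets borel"
  using measurable_sets[OF phi_meas, of A c] by simp

lemma Tm_meas: "Tm L \<in> measurable (alpha_space L) (alpha_space L)"
  unfolding alpha_space_def Tm_def by measurable

lemma Tm_pres:
  assumes L: "L \<ge> 1"
  shows "distr (alpha_space L) (alpha_space L) (Tm L) = alpha_space L"
proof -
  have pps: "product_prob_space (\<lambda>_::nat. U)" by (rule product_prob_spaceI) (rule U_prob)
  interpret product_sigma_finite "\<lambda>_::nat. U"
    using pps unfolding product_prob_space_def by simp
  show ?thesis unfolding alpha_space_def'
  proof (rule PiM_eqI)
    show "finite {..<L}" by simp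
    show "sets (distr (PiM {..<L} (\<lambda>_. U)) (PiM {..<L} (\<lambda>_. U)) (Tm L)) = sets (PiM {..<L} (\<lambda>_. U))"
      by simp
    fix A assume A: "\<And>i. i \<in> {..<L} \<Longrightarrow> A i \<in> sets U"
    have Ab: "\<And>i. i \<in> {..<L} \<Longrightarrow> A i \<in> sets borel" using A by simp
    have "emeasure (distr (PiM {..<L} (\<lambda>_. U)) (PiM {..<L} (\<lambda>_. U)) (Tm L)) (PiE {..<L} A)
        = emeasure (PiM {..<L} (\<lambda>_. U)) (Tm L -` PiE {..<L} A \<inter> space (PiM {..<L} (\<lambda>_. U)))"
      using A Tm_meas[of L] unfolding alpha_space_def'
      by (intro emeasure_distr) (auto intro!: sets_PiM_I_finite)
    also have "Tm L -` PiE {..<L} A \<inter> space (PiM {..<L} (\<lambda>_. U))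
        = PiE {..<L} (\<lambda>i. phi (real i / real L) -` A i \<inter> space U)"
      by (auto simp: Tm_def space_PiM PiE_def Pi_def extensional_def)
    also have "emeasure (PiM {..<L} (\<lambda>_. U)) \<dots> = (\<Prod>i<L. emeasure U (phi (real i / real L) -` A i \<inter> space U))"
      using Ab by (intro emeasure_PiM) (auto intro: phi_sets)
    also have "\<dots> = (\<Prod>i<L. emeasure U (A i))"
      using Ab L by (intro prod.cong refl phi_pres) auto
    finally show "emeasure (distr (PiM {..<L} (\<lambda>_. U)) (PiM {..<L} (\<lambda>_. U)) (Tm L)) (PiE {..<L} A)
        = (\<Prod>i\<in>{..<L}. emeasure U (A i))" by simp
  qed
qed

lemma measurable_round[measurable]: "(round :: real \<Rightarrow> int) \<in> measurable borel (count_space UNIV)"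
proof -
  have e: "round = (\<lambda>x::real. floor (x + 1/2))" by (auto simp: round_def)
  show ?thesis unfolding e by measurable
qed

lemma comp_meas: "j < L \<Longrightarrow> (\<lambda>\<alpha>. \<alpha> j) \<in> borel_measurable (alpha_space L)"
  unfolding alpha_space_def by measurable

lemma lap_meas[measurable]: "1 \<le> L \<Longrightarrow> (\<lambda>\<alpha>. lap L \<alpha> i) \<in> borel_measurable (alpha_space L)"
proof -
  assume L: "1 \<le> L"
  have a: "(i + L - 1) mod L < L" "i mod L < L" "(i + 1) mod L < L" using L by auto
  show ?thesis unfolding lap_def
    by (intro borel_measurable_add borel_measurable_diff borel_measurable_times borel_measurable_const comp_meas a)
qed

lemma omega_meas[measurable]: "1 \<le> L \<Longrightarrow> (\<lambda>\<alpha>. omega L \<alpha> i) \<in> borel_measurable (alpha_space L)"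
  unfolding omega_def by measurable

lemma round_lap_meas[measurable]: "1 \<le> L \<Longrightarrow> (\<lambda>\<alpha>. round (lap L \<alpha> i)) \<in> measurable (alpha_space L) (count_space UNIV)"
  by measurable

lemma omega_restrict_meas: "1 \<le> L \<Longrightarrow> (\<lambda>\<alpha>. restrict (omega L \<alpha>) {..<L}) \<in> measurable (alpha_space L) (PiM {..<L} (\<lambda>_. borel))"
  by measurable

lemma pred_const'[measurable]: "Measurable.pred M (\<lambda>x. P)" by (cases P) (auto simp: Measurable.pred_def)

lemma pred_omega_le[measurable]: "1 \<le> L \<Longrightarrow> Measurable.pred (alpha_space L) (\<lambda>\<alpha>. omega L \<alpha> i \<le> omega L \<alpha> j)"
  unfolding Measurable.pred_def by (intro borel_measurable_le omega_meas)

lemma test: "1 \<le> L \<Longrightarrow> {\<alpha> \<in> space (alpha_space L). (\<forall>i\<in>{..<L}. round (lap L \<alpha> i) = z i) \<and>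
   (\<forall>i\<in>{..<L}. \<forall>j\<in>{..<L}. (omega L \<alpha> i \<le> omega L \<alpha> j) = ((i,j) \<in> R))} \<in> sets (alpha_space L)"
  by measurable

lemma insort_key_cong:
  assumes "\<forall>x\<in>set (a # ys). \<forall>y\<in>set (a # ys). (f x \<le> f y) = (g x \<le> g y)"
  shows "insort_key f a ys = insort_key g a ys"
  using assms by (induction ys) auto

lemma sort_key_cong':
  assumes "\<forall>x\<in>set xs. \<forall>y\<in>set xs. (f x \<le> f y) = (g x \<le> g y)"
  shows "sort_key f xs = sort_key (g :: 'a \<Rightarrow> 'b::linorder) xs"
  using assms
proof (induction xs)
  case Nil then show ?case by simp
next
  case (Cons a xs)
  then have "sort_key f xs = sort_key g xs" by simp
  moreover have "insort_key f a (sort_key g xs) = insort_key g a (sort_key g xs)"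
    using Cons.prems by (intro insort_key_cong) (simp add: set_sort)
  ultimately show ?case by simp
qed

lemma dval_key:
  assumes r: "\<forall>i<L. round (lap L \<alpha> i) = round (lap L \<beta> i)"
    and c: "\<forall>i<L. \<forall>j<L. (omega L \<alpha> i \<le> omega L \<alpha> j) = (omega L \<beta> i \<le> omega L \<beta> j)"
  shows "dval L \<alpha> = dval L \<beta>"
proof -
  have s: "Ssum L \<alpha> = Ssum L \<beta>" unfolding Ssum_def using r by simp
  have sg: "sigma L \<alpha> = sigma L \<beta>"
    unfolding sigma_def using c by (subst sort_key_cong'[of _ "omega L \<alpha>" "omega L \<beta>"]) auto
  have j: "Jp L \<alpha> = Jp L \<beta>" by (rule ext) (simp add: Jp_def s sg)
  show ?thesis unfolding dval_def j using r by simp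
qed

definition key :: "nat \<Rightarrow> (nat \<Rightarrow> real) \<Rightarrow> (nat \<Rightarrow> int) \<times> (nat \<times> nat) set" where
  "key L \<alpha> = (restrict (\<lambda>i. round (lap L \<alpha> i)) {..<L},
     {(i, j). i < L \<and> j < L \<and> omega L \<alpha> i \<le> omega L \<alpha> j})"

definition Sk :: "nat \<Rightarrow> (nat \<Rightarrow> int) \<times> (nat \<times> nat) set \<Rightarrow> (nat \<Rightarrow> real) set" where
  "Sk L \<kappa> = {\<alpha> \<in> space (alpha_space L). (\<forall>i\<in>{..<L}. round (lap L \<alpha> i) = fst \<kappa> i) \<and>
   (\<forall>i\<in>{..<L}. \<forall>j\<in>{..<L}. (omega L \<alpha> i \<le> omega L \<alpha> j) = ((i,j) \<in> snd \<kappa>))}"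

lemma Sk_sets: "1 \<le> L \<Longrightarrow> Sk L \<kappa> \<in> sets (alpha_space L)"
  unfolding Sk_def by measurable

lemma Sk_self: "\<alpha> \<in> space (alpha_space L) \<Longrightarrow> \<alpha> \<in> Sk L (key L \<alpha>)"
  by (simp add: Sk_def key_def)

lemma Sk_key: "\<alpha> \<in> Sk L (key L \<beta>) \<Longrightarrow> dval L \<alpha> = dval L \<beta>"
proof -
  assume a: "\<alpha> \<in> Sk L (key L \<beta>)"
  have r: "\<forall>i<L. round (lap L \<alpha> i) = round (lap L \<beta> i)"
    using a unfolding Sk_def key_def by simp
  have c: "\<forall>i<L. \<forall>j<L. (omega L \<alpha> i \<le> omega L \<alpha> j) = (omega L \<beta> i \<le> omega L \<beta> j)"
    using a unfolding Sk_def key_def by simp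
  show ?thesis by (rule dval_key[OF r c])
qed

lemma key_range: "key L \<alpha> \<in> (PiE {..<L} (\<lambda>_. UNIV)) \<times> Pow ({..<L} \<times> {..<L})"
  unfolding key_def by auto

lemma countable_range: "countable ((PiE {..<L} (\<lambda>_. UNIV :: int set)) \<times> Pow ({..<L::nat} \<times> {..<L}))"
proof -
  have "countable (PiE {..<L} (\<lambda>_. UNIV :: int set))" by (rule countable_PiE) (auto intro: countableI_type)
  moreover have "countable (Pow ({..<L} \<times> {..<L}))" by (rule countable_finite) auto
  ultimately show ?thesis by (rule countable_SIGMA)
qed

lemma dval_meas:
  assumes L: "1 \<le> L"
  shows "dval L \<in> measurable (alpha_space L) (count_space UNIV)"
proof -
  have "dval L -` {k} \<inter> space (alpha_space L) \<in> sets (alpha_space L)" for k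
  proof -
  let ?K = "key L ` (dval L -` {k} \<inter> space (alpha_space L))"
  have eq: "dval L -` {k} \<inter> space (alpha_space L) = (\<Union>\<kappa>\<in>?K. Sk L \<kappa>)"
  proof
    show "dval L -` {k} \<inter> space (alpha_space L) \<subseteq> (\<Union>\<kappa>\<in>?K. Sk L \<kappa>)"
    proof (rule subsetI)
      fix \<alpha> assume "\<alpha> \<in> dval L -` {k} \<inter> space (alpha_space L)"
      then show "\<alpha> \<in> (\<Union>\<kappa>\<in>?K. Sk L \<kappa>)" using Sk_self[of \<alpha> L] by blast
    qed
  next
    show "(\<Union>\<kappa>\<in>?K. Sk L \<kappa>) \<subseteq> dval L -` {k} \<inter> space (alpha_space L)"
    proof (rule subsetI)
      fix \<alpha> assume "\<alpha> \<in> (\<Union>\<kappa>\<in>?K. Sk L \<kappa>)"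
      then obtain \<beta> where b: "\<beta> \<in> dval L -` {k} \<inter> space (alpha_space L)" and a: "\<alpha> \<in> Sk L (key L \<beta>)"
        by blast
      have "dval L \<alpha> = dval L \<beta>"
        using a by (rule Sk_key)
      then show "\<alpha> \<in> dval L -` {k} \<inter> space (alpha_space L)" using a b by (simp add: Sk_def)
    qed
  qed
  have cK: "countable ?K"
    by (rule countable_subset[OF _ countable_range]) (use key_range in blast)
  show "dval L -` {k} \<inter> space (alpha_space L) \<in> sets (alpha_space L)"
  proof -
    have "(\<Union>\<kappa>\<in>?K. Sk L \<kappa>) \<in> sets (alpha_space L)"
      by (rule sets.countable_UN''[OF cK]) (rule Sk_sets[OF L])
    then show ?thesis by (simp only: eq[symmetric])
  qed
  qed
  then show ?thesis unfolding measurable_count_space_eq2_countable by simp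
qed

lemma prob_alpha: "prob_space (alpha_space L)"
  unfolding alpha_space_def by (intro prob_space_PiM U_prob)

abbreviation W :: "nat \<Rightarrow> (nat \<Rightarrow> real) \<Rightarrow> nat \<Rightarrow> real" where
  "W L \<alpha> \<equiv> restrict (omega L \<alpha>) {..<L}"

definition E :: "nat \<Rightarrow> nat \<Rightarrow> (nat \<Rightarrow> real) set \<Rightarrow> (nat \<Rightarrow> real) set" where
  "E L k B = {\<alpha> \<in> space (alpha_space L). dval L \<alpha> = k \<and> W L \<alpha> \<in> B}"

lemma dval_lt: "1 \<le> L \<Longrightarrow> dval L \<alpha> < L"
proof -
  assume L: "1 \<le> L"
  have "(\<Sum>i<L. int i * (round (lap L \<alpha> i) - Jp L \<alpha> i)) mod int L < int L" using L by simp
  then show ?thesis unfolding dval_def using L by (simp add: nat_less_iff)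
qed

context
  fixes L :: nat and B :: "(nat \<Rightarrow> real) set"
  assumes L: "1 \<le> L" and B: "B \<in> sets (PiM {..<L} (\<lambda>_. borel))"
begin

interpretation P: prob_space "alpha_space L" by (rule prob_alpha)

lemma W_meas: "W L \<in> measurable (alpha_space L) (PiM {..<L} (\<lambda>_. borel))"
  using omega_restrict_meas[OF L] .

lemma Wpre_sets: "{\<alpha> \<in> space (alpha_space L). W L \<alpha> \<in> B} \<in> sets (alpha_space L)"
  using measurable_sets[OF W_meas B] by (simp add: vimage_def Int_def conj_commute)

lemma E_sets: "E L k B \<in> sets (alpha_space L)"
proof -
  have "E L k B = (dval L -` {k} \<inter> space (alpha_space L)) \<inter> {\<alpha> \<in> space (alpha_space L). W L \<alpha> \<in> B}"
    by (auto simp: E_def)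
  also have "\<dots> \<in> sets (alpha_space L)"
    using measurable_sets[OF dval_meas[OF L], of "{k}"] Wpre_sets by auto
  finally show ?thesis .
qed

lemma E_shift: "measure (alpha_space L) (E L k B) = measure (alpha_space L) (E L ((k + L - 1) mod L) B)"
  if k: "k < L"
proof -
  have "emeasure (alpha_space L) (E L k B) = emeasure (distr (alpha_space L) (alpha_space L) (Tm L)) (E L k B)"
    by (simp add: Tm_pres[OF L])
  also have "\<dots> = emeasure (alpha_space L) (Tm L -` E L k B \<inter> space (alpha_space L))"
    by (rule emeasure_distr[OF Tm_meas E_sets])
  also have "Tm L -` E L k B \<inter> space (alpha_space L) = E L ((k + L - 1) mod L) B"
  proof -
    have "\<alpha> \<in> space (alpha_space L) \<Longrightarrow> ((dval L \<alpha> + 1) mod L = k) = (dval L \<alpha> = (k + L - 1) mod L)" for \<alpha>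
      using dval_lt[OF L, of \<alpha>] k by (cases "dval L \<alpha> + 1 = L") (auto simp: mod_if)
    moreover have "\<alpha> \<in> space (alpha_space L) \<Longrightarrow> Tm L \<alpha> \<in> space (alpha_space L)" for \<alpha>
      using measurable_space[OF Tm_meas] by blast
    ultimately show ?thesis
      unfolding E_def using Tm_shift[OF L] by auto
  qed
  finally show ?thesis by (simp add: measure_def)
qed

lemma E_const: "k < L \<Longrightarrow> measure (alpha_space L) (E L k B) = measure (alpha_space L) (E L 0 B)"
proof (induction k)
  case 0 then show ?case by simp
next
  case (Suc k)
  then have "measure (alpha_space L) (E L (Suc k) B) = measure (alpha_space L) (E L k B)"
    using E_shift[of "Suc k"] by (simp add: mod_if)
  then show ?case using Suc by simp
qed

lemma E_union: "(\<Union>k\<in>A \<inter> {..<L}. E L k B) = {\<alpha> \<in> space (alpha_space L). dval L \<alpha> \<in> A \<and> W L \<alpha> \<in> B}"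
  using dval_lt[OF L] by (auto simp: E_def)

lemma E_sum: "measure (alpha_space L) {\<alpha> \<in> space (alpha_space L). dval L \<alpha> \<in> A \<and> W L \<alpha> \<in> B}
   = real (card (A \<inter> {..<L})) * measure (alpha_space L) (E L 0 B)"
proof -
  have "measure (alpha_space L) {\<alpha> \<in> space (alpha_space L). dval L \<alpha> \<in> A \<and> W L \<alpha> \<in> B}
      = (\<Sum>k\<in>A \<inter> {..<L}. measure (alpha_space L) (E L k B))"
    unfolding E_union[symmetric]
  proof (intro P.finite_measure_finite_Union)
    show "disjoint_family_on (\<lambda>k. E L k B) (A \<inter> {..<L})"
      by (auto simp: disjoint_family_on_def E_def)
  qed (auto intro: E_sets)
  also have "\<dots> = (\<Sum>k\<in>A \<inter> {..<L}. measure (alpha_space L) (E L 0 B))"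
    by (intro sum.cong refl E_const) auto
  finally show ?thesis by simp
qed

lemma E0: "measure (alpha_space L) (E L 0 B) = measure (alpha_space L) {\<alpha> \<in> space (alpha_space L). W L \<alpha> \<in> B} / real L"
  using E_sum[of UNIV] L by (simp add: field_simps)

lemma joint: "measure (alpha_space L) {\<alpha> \<in> space (alpha_space L). dval L \<alpha> \<in> A \<and> W L \<alpha> \<in> B}
   = real (card (A \<inter> {..<L})) / real L * measure (alpha_space L) {\<alpha> \<in> space (alpha_space L). W L \<alpha> \<in> B}"
  unfolding E_sum E0 by simp

end

theorem lemma3:
  fixes L :: nat
  assumes "L \<ge> 1"
  shows "(\<forall>k<L. measure (alpha_space L) {\<alpha> \<in> space (alpha_space L). dval L \<alpha> = k} = 1 / real L)
       \<and> dval L \<in> measurable (alpha_space L) (count_space UNIV)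
       \<and> (\<lambda>\<alpha>. restrict (omega L \<alpha>) {..<L})
            \<in> measurable (alpha_space L) (PiM {..<L} (\<lambda>_. borel))
       \<and> distr (alpha_space L) (count_space UNIV) (dval L)
           \<Otimes>\<^sub>M distr (alpha_space L) (PiM {..<L} (\<lambda>_. borel)) (\<lambda>\<alpha>. restrict (omega L \<alpha>) {..<L})
         = distr (alpha_space L) (count_space UNIV \<Otimes>\<^sub>M PiM {..<L} (\<lambda>_. borel))
             (\<lambda>\<alpha>. (dval L \<alpha>, restrict (omega L \<alpha>) {..<L}))"
proof -
  have L: "1 \<le> L" using assms by simp
  interpret P: prob_space "alpha_space L" by (rule prob_alpha)
  let ?M = "alpha_space L" and ?PB = "PiM {..<L} (\<lambda>_. borel :: real measure)"
  note Wm = omega_restrict_meas[OF L]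
  note dm = dval_meas[OF L]
  have Wspace: "\<And>\<alpha>. \<alpha> \<in> space ?M \<Longrightarrow> W L \<alpha> \<in> space ?PB"
    using measurable_space[OF Wm] by blast
  have Wall: "{\<alpha> \<in> space ?M. W L \<alpha> \<in> space ?PB} = space ?M" using Wspace by blast
  have pA: "measure ?M {\<alpha> \<in> space ?M. dval L \<alpha> \<in> A} = real (card (A \<inter> {..<L})) / real L" for A
  proof -
    have "{\<alpha> \<in> space ?M. dval L \<alpha> \<in> A} = {\<alpha> \<in> space ?M. dval L \<alpha> \<in> A \<and> W L \<alpha> \<in> space ?PB}"
      using Wspace by blast
    then show ?thesis using joint[OF L sets.top, of A] unfolding Wall by (simp add: P.prob_space)
  qed
  have part1: "\<forall>k<L. measure ?M {\<alpha> \<in> space ?M. dval L \<alpha> = k} = 1 / real L"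
  proof (intro allI impI)
    fix k assume k: "k < L"
    have "{k} \<inter> {..<L} = {k}" using k by auto
    then show "measure ?M {\<alpha> \<in> space ?M. dval L \<alpha> = k} = 1 / real L"
      using pA[of "{k}"] by simp
  qed
  have part4: "distr ?M (count_space UNIV) (dval L) \<Otimes>\<^sub>M distr ?M ?PB (W L)
      = distr ?M (count_space UNIV \<Otimes>\<^sub>M ?PB) (\<lambda>\<alpha>. (dval L \<alpha>, W L \<alpha>))"
  proof (rule pair_measure_eqI)
    show "sigma_finite_measure (distr ?M (count_space UNIV) (dval L))"
      by (intro prob_space_imp_sigma_finite P.prob_space_distr dm)
    show "sigma_finite_measure (distr ?M ?PB (W L))"
      by (intro prob_space_imp_sigma_finite P.prob_space_distr Wm)
    show "sets (distr ?M (count_space UNIV) (dval L) \<Otimes>\<^sub>M distr ?M ?PB (W L))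
        = sets (distr ?M (count_space UNIV \<Otimes>\<^sub>M ?PB) (\<lambda>\<alpha>. (dval L \<alpha>, W L \<alpha>)))"
      by (simp add: sets_pair_measure_cong)
    fix A B assume A: "A \<in> sets (distr ?M (count_space UNIV) (dval L))"
      and B: "B \<in> sets (distr ?M ?PB (W L))"
    have B': "B \<in> sets ?PB" using B by simp
    have jm: "(\<lambda>\<alpha>. (dval L \<alpha>, W L \<alpha>)) \<in> measurable ?M (count_space UNIV \<Otimes>\<^sub>M ?PB)"
      using dm Wm by (rule measurable_Pair)
    have AB: "A \<times> B \<in> sets (count_space UNIV \<Otimes>\<^sub>M ?PB)" using B' by (intro pair_measureI) auto
    have "emeasure (distr ?M (count_space UNIV) (dval L)) A = emeasure ?M (dval L -` A \<inter> space ?M)"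
      using A by (intro emeasure_distr dm) simp
    also have "dval L -` A \<inter> space ?M = {\<alpha> \<in> space ?M. dval L \<alpha> \<in> A}" by auto
    finally have e1: "emeasure (distr ?M (count_space UNIV) (dval L)) A = ennreal (real (card (A \<inter> {..<L})) / real L)"
      by (simp add: P.emeasure_eq_measure pA)
    have "emeasure (distr ?M ?PB (W L)) B = emeasure ?M (W L -` B \<inter> space ?M)"
      using B' by (intro emeasure_distr Wm)
    also have "W L -` B \<inter> space ?M = {\<alpha> \<in> space ?M. W L \<alpha> \<in> B}" by auto
    finally have e2: "emeasure (distr ?M ?PB (W L)) B = emeasure ?M {\<alpha> \<in> space ?M. W L \<alpha> \<in> B}" .
    have "emeasure (distr ?M (count_space UNIV \<Otimes>\<^sub>M ?PB) (\<lambda>\<alpha>. (dval L \<alpha>, W L \<alpha>))) (A \<times> B)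
        = emeasure ?M ((\<lambda>\<alpha>. (dval L \<alpha>, W L \<alpha>)) -` (A \<times> B) \<inter> space ?M)"
      by (rule emeasure_distr[OF jm AB])
    also have "(\<lambda>\<alpha>. (dval L \<alpha>, W L \<alpha>)) -` (A \<times> B) \<inter> space ?M = {\<alpha> \<in> space ?M. dval L \<alpha> \<in> A \<and> W L \<alpha> \<in> B}"
      by auto
    finally have e3: "emeasure (distr ?M (count_space UNIV \<Otimes>\<^sub>M ?PB) (\<lambda>\<alpha>. (dval L \<alpha>, W L \<alpha>))) (A \<times> B)
        = emeasure ?M {\<alpha> \<in> space ?M. dval L \<alpha> \<in> A \<and> W L \<alpha> \<in> B}" .
    show "emeasure (distr ?M (count_space UNIV) (dval L)) A * emeasure (distr ?M ?PB (W L)) B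
        = emeasure (distr ?M (count_space UNIV \<Otimes>\<^sub>M ?PB) (\<lambda>\<alpha>. (dval L \<alpha>, W L \<alpha>))) (A \<times> B)"
      unfolding e1 e2 e3 P.emeasure_eq_measure joint[OF L B']
      by (simp add: ennreal_mult''[symmetric] divide_nonneg_nonneg)
  qed
  show ?thesis using part1 dm Wm part4 by blast
qed

end
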